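(* Let $k\ge2$ and let $G\in\mathbb{N}_0^k$ with $g_1>0$. If $G$ is telescopic, then $\rho_n(G)$ is telescopic for every $n\in\{2,\dots,k\}$.
   Context: $\langle A\rangle$ is the set of $\mathbb{N}_0$-linear combinations. For $G=(g_1,\dots,g_k)$ with $g_1>0$: $G_i=(g_1,\dots,g_i)$, $d_i=\gcd(G_i)$, $c(G)=(c_2,\dots,c_k)$ with $c_j=d_{j-1}/d_j$; $G$ is telescopic if $c_jg_j\in\langle G_{j-1}\rangle$ for $2\le j\le k$. For $k\ge2$ and $2\le n\le k$, $\rho_n(G)=(g_1/c_n,\dots,g_{n-1}/c_n,g_{n+1},\dots,g_k)\in\mathbb{N}_0^{k-1}$ (the entries $g_i/c_n$, $i<n$, are integers since $c_n\mid d_{n-1}$). *)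

theory Defs
  imports Main
begin

text \<open>Sequences G = (g_1,...,g_k) are lists of naturals; g_i = G ! (i - 1).\<close>

definition numsg :: "nat list \<Rightarrow> nat set" where
  "numsg A = {x. \<exists>cs. length cs = length A \<and> x = (\<Sum>i<length A. cs ! i * A ! i)}"

definition pref :: "nat list \<Rightarrow> nat \<Rightarrow> nat list" where
  "pref G i = take i G"

definition dseq :: "nat list \<Rightarrow> nat \<Rightarrow> nat" where
  "dseq G i = Gcd (set (pref G i))"

definition cseq :: "nat list \<Rightarrow> nat \<Rightarrow> nat" where
  "cseq G j = dseq G (j - 1) div dseq G j"

definition telescopic :: "nat list \<Rightarrow> bool" where
  "telescopic G \<longleftrightarrow>
     (\<forall>j. 2 \<le> j \<and> j \<le> length G \<longrightarrow> cseq G j * G ! (j - 1) \<in> numsg (pref G (j - 1)))"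

definition rho :: "nat \<Rightarrow> nat list \<Rightarrow> nat list" where
  "rho n G = map (\<lambda>g. g div cseq G n) (take (n - 1) G) @ drop n G"

end

theory Submission
  imports Defs
begin

inductive_set gen :: "nat set \<Rightarrow> nat set" for S where
  gen0: "0 \<in> gen S"
| genS: "s \<in> S \<Longrightarrow> x \<in> gen S \<Longrightarrow> s + x \<in> gen S"

lemma gen_add: "x \<in> gen S \<Longrightarrow> y \<in> gen S \<Longrightarrow> x + y \<in> gen S"
  by (induction rule: gen.induct) (simp, metis add.assoc gen.genS)

lemma gen_mult: "s \<in> S \<Longrightarrow> m * s \<in> gen S"
  by (induction m) (simp_all add: gen.gen0 gen.genS)

lemma gen_sub: "x \<in> gen S \<Longrightarrow> S \<subseteq> gen T \<Longrightarrow> x \<in> gen T"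
  by (induction rule: gen.induct) (auto intro: gen.gen0 gen_add)

lemma gen_base: "s \<in> S \<Longrightarrow> s \<in> gen S"
  using gen_mult[of s S 1] by simp

lemma gen_div: "x \<in> gen S \<Longrightarrow> \<forall>s\<in>S. (c::nat) dvd s \<Longrightarrow> x div c \<in> gen ((\<lambda>s. s div c) ` S)"
proof (induction rule: gen.induct)
  case gen0 then show ?case by (simp add: gen.gen0)
next
  case (genS s x)
  then have "(s + x) div c = s div c + x div c" by (simp add: div_plus_div_distrib_dvd_left)
  then show ?case using genS by (simp add: gen.genS)
qed

lemma gen_sum: "finite I \<Longrightarrow> (\<forall>i\<in>I. f i \<in> gen S) \<Longrightarrow> sum f I \<in> gen S"
  by (induction I rule: finite_induct) (auto intro: gen.gen0 gen_add)

lemma numsg_gen: "numsg A = gen (set A)"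
proof
  show "numsg A \<subseteq> gen (set A)"
  proof
    fix x assume "x \<in> numsg A"
    then obtain cs where x: "x = (\<Sum>i<length A. cs ! i * A ! i)" unfolding numsg_def by auto
    show "x \<in> gen (set A)" unfolding x
      by (rule gen_sum) (auto intro: gen_mult)
  qed
next
  show "gen (set A) \<subseteq> numsg A"
  proof
    fix x assume "x \<in> gen (set A)"
    then show "x \<in> numsg A"
    proof (induction rule: gen.induct)
      case gen0
      show ?case unfolding numsg_def
        by (rule CollectI, rule exI[of _ "replicate (length A) 0"]) simp
    next
      case (genS s x)
      then obtain cs where cs: "length cs = length A" and x: "x = (\<Sum>i<length A. cs ! i * A ! i)"
        unfolding numsg_def by auto
      from genS(1) obtain t where t: "t < length A" "A ! t = s" by (auto simp: in_set_conv_nth)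
      define cs' where "cs' = cs[t := cs ! t + 1]"
      have len: "length cs' = length A" using cs by (simp add: cs'_def)
      have "(\<Sum>i<length A. cs' ! i * A ! i) = (\<Sum>i<length A. cs ! i * A ! i + (if i = t then A ! i else 0))"
      proof (rule sum.cong)
        fix i assume "i \<in> {..<length A}"
        then show "cs' ! i * A ! i = cs ! i * A ! i + (if i = t then A ! i else 0)"
          unfolding cs'_def using cs by (cases "i = t") (simp_all add: nth_list_update)
      qed simp
      also have "\<dots> = x + (\<Sum>i<length A. if i = t then A ! i else 0)"
        unfolding x by (rule sum.distrib)
      also have "(\<Sum>i<length A. if i = t then A ! i else 0) = s" using t by (simp add: sum.delta)
      finally have eq: "s + x = (\<Sum>i<length A. cs' ! i * A ! i)" by simp
      show ?case unfolding numsg_def by (rule CollectI, rule exI[of _ cs']) (use eq len in simp)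
    qed
  qed
qed

lemma Gcd_Un_nat: "Gcd ((A::nat set) \<union> B) = gcd (Gcd A) (Gcd B)"
proof (rule dvd_antisym)
  show "Gcd (A \<union> B) dvd gcd (Gcd A) (Gcd B)"
    by (intro gcd_greatest Gcd_greatest) (simp_all add: Gcd_dvd)
  show "gcd (Gcd A) (Gcd B) dvd Gcd (A \<union> B)"
  proof (rule Gcd_greatest)
    fix b assume "b \<in> A \<union> B"
    then show "gcd (Gcd A) (Gcd B) dvd b"
      by (metis Gcd_dvd UnE dvd_trans gcd_dvd1 gcd_dvd2)
  qed
qed

lemma Gcd_div_nat:
  assumes "(c::nat) > 0" "\<forall>s\<in>A. c dvd s"
  shows "Gcd ((\<lambda>s. s div c) ` A) = Gcd A div c"
proof -
  have "(\<lambda>s. c * (s div c)) ` A = id ` A" by (rule image_cong) (use assms in auto)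
  then have "A = (*) c ` ((\<lambda>s. s div c) ` A)" by (simp add: image_image)
  then have "Gcd A = c * Gcd ((\<lambda>s. s div c) ` A)" using Gcd_mult[of c "(\<lambda>s. s div c) ` A"] by simp
  then show ?thesis using assms by simp
qed

theorem mainTheorem11:
  fixes G :: "nat list" and n :: nat
  assumes "length G \<ge> 2" and "G ! 0 > 0" and "telescopic G"
    and "2 \<le> n" and "n \<le> length G"
  shows "telescopic (rho n G)"
proof -
  define k where "k = length G"
  define d where "d = dseq G"
  define c where "c = cseq G n"
  define f where "f = (\<lambda>g::nat. g div c)"
  define H where "H = rho n G"
  have kn: "2 \<le> n" "n \<le> k" using assms k_def by auto
  have tel: "\<And>j. 2 \<le> j \<Longrightarrow> j \<le> k \<Longrightarrow> cseq G j * G ! (j - 1) \<in> gen (set (take (j - 1) G))"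
  proof -
    fix j assume j: "2 \<le> j" "j \<le> k"
    then have "cseq G j * G ! (j - 1) \<in> numsg (pref G (j - 1))"
      using assms(3) k_def unfolding telescopic_def by blast
    then show "cseq G j * G ! (j - 1) \<in> gen (set (take (j - 1) G))" by (simp add: numsg_gen pref_def)
  qed
  have d_eq: "\<And>i. d i = Gcd (set (take i G))" unfolding d_def dseq_def pref_def by simp
  have dpos: "\<And>i. 1 \<le> i \<Longrightarrow> i \<le> k \<Longrightarrow> d i > 0"
  proof -
    fix i assume i: "1 \<le> i" "i \<le> k"
    have "take i G ! 0 \<in> set (take i G)" by (rule nth_mem) (use i k_def in simp)
    then have mem: "G ! 0 \<in> set (take i G)" using i by simp
    show "d i > 0"
    proof (rule ccontr)
      assume "\<not> d i > 0"
      then have "set (take i G) \<subseteq> {0}" using d_eq by simp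
      with mem assms(2) show False by auto
    qed
  qed
  have ddvd: "\<And>i i'. i \<le> i' \<Longrightarrow> d i' dvd d i"
    unfolding d_eq by (rule Gcd_greatest) (meson Gcd_dvd set_take_subset_set_take subsetD)
  have takeG: "\<And>m. n \<le> m \<Longrightarrow> take m G = take (n-1) G @ [G ! (n-1)] @ take (m-n) (drop n G)"
  proof -
    fix m assume m: "n \<le> m"
    have "take m G = take n G @ take (m - n) (drop n G)"
      using m take_add[of n "m-n" G] by simp
    moreover have "take n G = take (n-1) G @ [G ! (n-1)]"
      using kn k_def take_Suc_conv_app_nth[of "n-1" G] by simp
    ultimately show "take m G = take (n-1) G @ [G ! (n-1)] @ take (m-n) (drop n G)" by simp
  qed
  have dn: "d n = gcd (d (n-1)) (G ! (n-1))"
    using takeG[of n] unfolding d_eq by (simp add: gcd.commute)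
  have dn1: "d n dvd d (n-1)" using ddvd by simp
  have dnpos: "d n > 0" using dpos kn by simp
  have cdn: "c * d n = d (n-1)" unfolding c_def cseq_def d_def[symmetric] using dn1 by simp
  have dn1pos: "d (n-1) > 0" using kn by (intro dpos) auto
  have cpos: "c > 0" using cdn dn1pos by (cases "c = 0") auto
  have cdvd: "\<And>s. s \<in> set (take (n-1) G) \<Longrightarrow> c dvd s"
    using cdn d_eq by (metis Gcd_dvd dvd_trans dvd_triv_left)
  have cdvd_d: "\<And>i. i \<le> n-1 \<Longrightarrow> c dvd d i"
    using cdn ddvd by (metis dvd_trans dvd_triv_left)
  have lenH: "length H = k - 1" unfolding H_def rho_def k_def using kn k_def by simp
  have takeH1: "\<And>i. i \<le> n-1 \<Longrightarrow> take i H = map f (take i G)"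
    unfolding H_def rho_def f_def c_def using kn k_def by (simp add: take_map min_def) arith
  have takeH2: "\<And>i. n-1 \<le> i \<Longrightarrow> take i H = map f (take (n-1) G) @ take (i-(n-1)) (drop n G)"
    unfolding H_def rho_def f_def c_def using kn k_def by (simp add: take_map min_def)
  have nthH1: "\<And>i. i < n-1 \<Longrightarrow> H ! i = f (G ! i)"
    unfolding H_def rho_def f_def c_def using kn k_def by (simp add: nth_append)
  have nthH2: "\<And>i. n-1 \<le> i \<Longrightarrow> i < k-1 \<Longrightarrow> H ! i = G ! (i+1)"
    unfolding H_def rho_def using kn k_def by (simp add: nth_append)
  have dH1: "\<And>i. i \<le> n-1 \<Longrightarrow> dseq H i = d i div c"
  proof -
    fix i assume i: "i \<le> n-1"
    have "\<forall>s\<in>set (take i G). c dvd s"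
      using cdvd subsetD[OF set_take_subset_set_take[OF i, of G]] by blast
    have "dseq H i = Gcd (f ` set (take i G))" unfolding dseq_def pref_def takeH1[OF i] by simp
    also have "\<dots> = Gcd (set (take i G)) div c" unfolding f_def
      by (rule Gcd_div_nat[OF cpos]) fact
    finally show "dseq H i = d i div c" using d_eq by simp
  qed
  have dH2: "\<And>i. n-1 \<le> i \<Longrightarrow> dseq H i = d (i+1)"
  proof -
    fix i assume i: "n-1 \<le> i"
    define U where "U = set (take (i-(n-1)) (drop n G))"
    have A: "dseq H i = gcd (Gcd (f ` set (take (n-1) G))) (Gcd U)"
      unfolding dseq_def pref_def takeH2[OF i] U_def by (simp add: Gcd_Un_nat)
    have B: "Gcd (f ` set (take (n-1) G)) = d n"
    proof -
      have "Gcd (f ` set (take (n-1) G)) = Gcd (set (take (n-1) G)) div c" unfolding f_def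
        by (rule Gcd_div_nat[OF cpos]) (intro ballI cdvd)
      also have "\<dots> = d (n-1) div c" using d_eq by simp
      also have "\<dots> = d n" unfolding cdn[symmetric] using cpos by simp
      finally show ?thesis .
    qed
    have C: "d (i+1) = gcd (d n) (Gcd U)"
    proof -
      have e: "n + (i-(n-1)) = i+1" using i kn by simp
      have "take (i+1) G = take n G @ take (i-(n-1)) (drop n G)"
        using take_add[of n "i-(n-1)" G] unfolding e .
      then have "set (take (i+1) G) = set (take n G) \<union> U" unfolding U_def by (simp only: set_append)
      then have "d (i+1) = Gcd (set (take n G) \<union> U)" using d_eq by simp
      also have "\<dots> = gcd (d n) (Gcd U)" using d_eq Gcd_Un_nat by simp
      finally show ?thesis .
    qed
    show "dseq H i = d (i+1)" using A B C by simp
  qed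
  show ?thesis
    unfolding telescopic_def H_def[symmetric] numsg_gen pref_def
  proof (intro allI impI)
    fix j assume j: "2 \<le> j \<and> j \<le> length H"
    show "cseq H j * H ! (j - 1) \<in> gen (set (take (j - 1) H))"
    proof (cases "j \<le> n-1")
      case True
      have cs: "cseq H j = cseq G j"
      proof -
        have "cseq H j = (d (j-1) div c) div (d j div c)"
          unfolding cseq_def using dH1 True by simp
        also have "\<dots> = d (j-1) div d j"
        proof -
          obtain e where e: "d j = c * e" using cdvd_d True by (meson dvdE)
          obtain q where q: "d (j-1) = d j * q" using ddvd[of "j-1" j] by (meson diff_le_self dvdE)
          show ?thesis using e q cpos by simp
        qed
        finally show ?thesis unfolding cseq_def d_def .
      qed
      have "cseq G j * G ! (j-1) \<in> gen (set (take (j-1) G))" using tel j lenH True kn by simp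
      moreover have "\<forall>s\<in>set (take (j-1) G). c dvd s"
        using cdvd subsetD[OF set_take_subset_set_take[of "j-1" "n-1" G]] True by auto
      ultimately have "(cseq G j * G ! (j-1)) div c \<in> gen (f ` set (take (j-1) G))"
        unfolding f_def by (rule gen_div)
      moreover have "(cseq G j * G ! (j-1)) div c = cseq G j * f (G ! (j-1))"
      proof -
        have "G ! (j-1) \<in> set (take (n-1) G)" using True j kn k_def lenH
          by (auto simp: in_set_conv_nth intro!: exI[of _ "j-1"])
        then show ?thesis using cdvd f_def by (simp add: div_mult_swap)
      qed
      moreover have "j - 1 < n - 1" using True j by linarith
      ultimately show ?thesis using cs nthH1[of "j-1"] takeH1[of "j-1"] by simp
    next
      case False
      then have jn: "n \<le> j" by simp
      have j1: "n-1 \<le> j-1" "n-1 \<le> j" "j-1 < k-1" "2 \<le> j+1" "j+1 \<le> k"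
        using jn j lenH kn by linarith+
      have cs: "cseq H j = cseq G (j+1)"
        unfolding cseq_def dH2[OF j1(1)] dH2[OF j1(2)] using j1 d_def by simp
      have hj: "H ! (j-1) = G ! j" using nthH2[OF j1(1) j1(3)] j1 by simp
      have x: "cseq G (j+1) * G ! j \<in> gen (set (take j G))" using tel[OF j1(4) j1(5)] by simp
      define U where "U = set (take (j-n) (drop n G))"
      have setH: "set (take (j-1) H) = f ` set (take (n-1) G) \<union> U"
      proof -
        have "j - 1 - (n - 1) = j - n" using jn kn by linarith
        then show ?thesis unfolding takeH2[OF j1(1)] U_def by simp
      qed
      have setG: "set (take j G) = insert (G ! (n-1)) (set (take (n-1) G)) \<union> U"
        unfolding takeG[OF jn] U_def by auto
      have gn: "G ! (n-1) \<in> gen (f ` set (take (n-1) G))"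
      proof -
        have "c * G ! (n-1) \<in> gen (set (take (n-1) G))" using tel[OF kn] unfolding c_def .
        from gen_div[OF this ballI[OF cdvd]]
        have "(c * G ! (n-1)) div c \<in> gen (f ` set (take (n-1) G))" unfolding f_def .
        then show ?thesis using cpos by simp
      qed
      have sub1: "f ` set (take (n-1) G) \<subseteq> gen (set (take (j-1) H))"
        unfolding setH by (intro subsetI gen_base) (rule UnI1)
      have "set (take j G) \<subseteq> gen (set (take (j-1) H))"
      proof
        fix s assume "s \<in> set (take j G)"
        then consider "s = G ! (n-1)" | "s \<in> set (take (n-1) G)" | "s \<in> U" unfolding setG by auto
        then show "s \<in> gen (set (take (j-1) H))"
        proof cases
          case 1
          then show ?thesis using gen_sub[OF gn sub1] by simp
        next
          case 2
          then have "s = c * f s" using cdvd[OF 2] f_def by simp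
          moreover have "f s \<in> set (take (j-1) H)" using 2 unfolding setH by simp
          ultimately show ?thesis using gen_mult[of "f s" "set (take (j-1) H)" c] by simp
        next
          case 3
          then show ?thesis unfolding setH by (intro gen_base UnI2)
        qed
      qed
      then show ?thesis using gen_sub[OF x] cs hj by simp
    qed
  qed
qed

end
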